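(* For $j\ge1$, let $p^{(n)}_j$ be the probability that a random straight line meets $\Pi_n$ in exactly $j$ points, given that it meets $\Pi_n$. Let $$h_n=-\sum_j p^{(n)}_j\log p^{(n)}_j$$ be the associated entropy. Then $$\limsup_{n\to\infty}\frac{h_n}{n}\le \log\left(\frac{2+\sqrt5}{1+\sqrt2}\right).$$
   Context: Work over the alphabet $\{L,R\}$. Let $\bar w$ denote the word $w$ with $L$ and $R$ exchanged, and let $\varepsilon$ be the empty word. Define words $q_n$ by $$q_0=\varepsilon,\qquad q_1=R,\qquad q_n=q_{n-1}q_{n-2}\ \text{ if } n\equiv 2 \pmod 3,\qquad q_n=q_{n-1}\overline{q_{n-2}}\ \text{ if } n\equiv 0,1 \pmod 3\quad (n\ge 2).$$ A word $w=w_1\cdots w_k$ encodes a lattice path in $\mathbb Z^2$ of $k+1$ unit segments: the path starts with a unit step, and after the $i$-th step it turns $90^\circ$ left if $w_i=L$ and $90^\circ$ right if $w_i=R$, then takes the next unit step. For a nonempty word $w$, let $w^{-}$ be $w$ with its last letter removed. The Fibonacci polygon $\Pi_n$ is the path encoded by $\big((q_{3n+1})^4\big)^{-}$. It is a closed non-self-intersecting polygon of $4|q_{3n+1}|$ unit segments. A straight line is written $x\cos\theta+y\sin\theta=\rho$ with $(\theta,\rho)\in[0,\pi)\times\mathbb R$. Probabilities refer to the measure $d\rho\,d\theta$ restricted to the set of lines meeting $\Pi_n$, normalized to a probability measure. Lines meeting $\Pi_n$ in infinitely many points form a null set and are ignored. The convention $0\log 0=0$ is used. *)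

theory Defs
  imports "HOL-Analysis.Analysis"
begin

datatype letter = L | R

definition flipw :: "letter list \<Rightarrow> letter list" where
  "flipw w = map (\<lambda>c. case c of L \<Rightarrow> R | R \<Rightarrow> L) w"

fun q :: "nat \<Rightarrow> letter list" where
  "q 0 = []"
| "q (Suc 0) = [R]"
| "q (Suc (Suc n)) =
     (if Suc (Suc n) mod 3 = 2 then q (Suc n) @ q n else q (Suc n) @ flipw (q n))"

text \<open>Lattice path in the complex plane: start at 0 with a unit step in direction 1;
  after the i-th step turn left (multiply direction by i) on L, right (by -i) on R.\<close>
fun heading :: "letter list \<Rightarrow> nat \<Rightarrow> complex" where
  "heading w 0 = 1"
| "heading w (Suc i) = heading w i * (if w ! i = L then \<i> else - \<i>)"

definition vert :: "letter list \<Rightarrow> nat \<Rightarrow> complex" where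
  "vert w k = (\<Sum>i<k. heading w i)"

text \<open>The point set of the path encoded by w: |w|+1 unit segments.\<close>
definition path_set :: "letter list \<Rightarrow> complex set" where
  "path_set w = (\<Union>i\<le>length w. closed_segment (vert w i) (vert w (Suc i)))"

definition Pi_poly :: "nat \<Rightarrow> complex set" where
  "Pi_poly n = path_set (butlast (concat (replicate 4 (q (3 * n + 1)))))"

definition line :: "real \<Rightarrow> real \<Rightarrow> complex set" where
  "line \<theta> \<rho> = {z. Re z * cos \<theta> + Im z * sin \<theta> = \<rho>}"

definition meeting_lines :: "nat \<Rightarrow> (real \<times> real) set" where
  "meeting_lines n = {(\<theta>, \<rho>). 0 \<le> \<theta> \<and> \<theta> < pi \<and> line \<theta> \<rho> \<inter> Pi_poly n \<noteq> {}}"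

definition pj :: "nat \<Rightarrow> nat \<Rightarrow> real" where
  "pj n j = measure lborel {(\<theta>, \<rho>) \<in> meeting_lines n.
              finite (line \<theta> \<rho> \<inter> Pi_poly n) \<and> card (line \<theta> \<rho> \<inter> Pi_poly n) = j}
            / measure lborel (meeting_lines n)"

text \<open>Entropy over j \<ge> 1, with 0 log 0 = 0 (automatic since 0 * x = 0).\<close>
definition hn :: "nat \<Rightarrow> real" where
  "hn n = - (\<Sum>j. pj n (Suc j) * ln (pj n (Suc j)))"

end

theory Submission
  imports Defs "HOL-Analysis.Analysis"
begin


lemma heading_prefix: "i \<le> length u \<Longrightarrow> heading (u@v) i = heading u i"
  by (induction i) (auto simp: nth_append)

lemma vert_prefix: "k \<le> length u \<Longrightarrow> vert (u@v) k = vert u k"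
  unfolding vert_def by (auto intro!: sum.cong simp: heading_prefix)

lemma vert_Suc: "vert w (Suc k) = vert w k + heading w k"
  by (simp add: vert_def)

lemma heading_app2: "heading (u@v) (length u + i) = heading u (length u) * heading v i"
  by (induction i) (auto simp: nth_append heading_prefix)

lemma vert_app2: "vert (u@v) (length u + i) = vert u (length u) + heading u (length u) * vert v i"
proof (induction i)
  case 0 then show ?case by (simp add: vert_prefix) (simp add: vert_def)
next
  case (Suc i)
  have "vert (u@v) (length u + Suc i) = vert (u@v) (length u + i) + heading (u@v) (length u + i)"
    using vert_Suc[of "u@v" "length u + i"] by simp
  also have "\<dots> = vert u (length u) + heading u (length u) * vert v (Suc i)"
    using Suc heading_app2[of u v i] by (simp add: vert_Suc distrib_left)
  finally show ?case .
qed

definition St where "St u = vert u (length u)"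
definition Tt where "Tt u = heading u (length u)"

lemma St_app: "St (u@v) = St u + Tt u * St v"
  using vert_app2[of u v "length v"] by (simp add: St_def Tt_def)
lemma Tt_app: "Tt (u@v) = Tt u * Tt v"
  using heading_app2[of u v "length v"] by (simp add: Tt_def)

lemma heading_flip: "i \<le> length v \<Longrightarrow> heading (flipw v) i = cnj (heading v i)"
proof (induction i)
  case 0 then show ?case by simp
next
  case (Suc i)
  then have "i < length v" by simp
  then show ?case using Suc by (cases "v!i") (auto simp: flipw_def)
qed

lemma length_flip[simp]: "length (flipw v) = length v" by (simp add: flipw_def)

lemma Tt_flip: "Tt (flipw v) = cnj (Tt v)" by (simp add: Tt_def heading_flip)
lemma St_flip: "St (flipw v) = cnj (St v)"
  by (simp add: St_def vert_def heading_flip)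

fun pell :: "nat \<Rightarrow> real" where
  "pell 0 = 0" | "pell (Suc 0) = 1" | "pell (Suc (Suc n)) = 2 * pell (Suc n) + pell n"

lemma q2: "q (3*n+2) = q (3*n+1) @ q (3*n)"
proof -
  have e: "3*n+2 = Suc (Suc (3*n))" "Suc (Suc (3*n)) mod 3 = 2" "Suc (3*n) = 3*n+1" by presburger+
  have "q (Suc (Suc (3*n))) = q (Suc (3*n)) @ q (3*n)"
    using q.simps(3)[of "3*n"] e(2) by (simp del: q.simps)
  then show ?thesis by (simp only: e)
qed
lemma q3: "q (3*n+3) = q (3*n+2) @ flipw (q (3*n+1))"
proof -
  have e: "3*n+3 = Suc (Suc (3*n+1))" "Suc (Suc (3*n+1)) mod 3 \<noteq> 2" "Suc (3*n+1) = 3*n+2" by presburger+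
  have "q (Suc (Suc (3*n+1))) = q (Suc (3*n+1)) @ flipw (q (3*n+1))"
    using q.simps(3)[of "3*n+1"] e(2) by (simp del: q.simps)
  then show ?thesis by (simp only: e)
qed
lemma q4: "q (3*n+4) = q (3*n+3) @ flipw (q (3*n+2))"
proof -
  have e: "3*n+4 = Suc (Suc (3*n+2))" "Suc (Suc (3*n+2)) mod 3 \<noteq> 2" "Suc (3*n+2) = 3*n+3" by presburger+
  have "q (Suc (Suc (3*n+2))) = q (Suc (3*n+2)) @ flipw (q (3*n+2))"
    using q.simps(3)[of "3*n+2"] e(2) by (simp del: q.simps)
  then show ?thesis by (simp only: e)
qed

lemma pos_stuff: "(-1::complex)^n * (-1)^n = 1" "cnj ((-1::complex)^n) = (-1)^n"
  by (simp_all add: power_mult_distrib[symmetric])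

lemma inv: "St (q (3*n)) = of_real (pell n) * (1 + \<i> * (-1)^n) \<and> Tt (q (3*n)) = 1 \<and>
  St (q (3*n+1)) = of_real (pell (n+1)) + \<i> * (-1)^n * of_real (pell n) \<and> Tt (q (3*n+1)) = - \<i> * (-1)^n"
proof (induction n)
  case 0 then show ?case by (simp add: St_def Tt_def vert_def)
next
  case (Suc n)
  define sg :: complex where "sg = (-1)^n"
  define a :: complex where "a = of_real (pell (n+1))"
  define b :: complex where "b = of_real (pell n)"
  have ss: "sg * sg = 1" "cnj sg = sg" using pos_stuff sg_def by auto
  have ab: "cnj a = a" "cnj b = b" by (simp_all add: a_def b_def)
  have ii: "\<i> * \<i> = -1" by simp
  have sS: "(-1::complex)^(Suc n) = -sg" by (simp add: sg_def)
  have h: "St (q (3*n)) = b * (1 + \<i> * sg)" "Tt (q (3*n)) = 1"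
    "St (q (3*n+1)) = a + \<i> * sg * b" "Tt (q (3*n+1)) = - \<i> * sg"
    using Suc by (auto simp: sg_def a_def b_def)
  have A: "St (q (3*n+2)) = a + b" "Tt (q (3*n+2)) = - \<i> * sg"
  proof -
    show "St (q (3*n+2)) = a + b" unfolding q2 St_app Tt_app h using ss ii by algebra
    show "Tt (q (3*n+2)) = - \<i> * sg" unfolding q2 Tt_app h by simp
  qed
  have B: "St (q (3*n+3)) = a * (1 - \<i> * sg)" "Tt (q (3*n+3)) = 1"
  proof -
    have "St (q (3*n+3)) = (a + b) + (-\<i>* sg) * (a - \<i> * sg * b)"
      unfolding q3 St_app Tt_app St_flip A h by (simp add: ab ss)
    then show "St (q (3*n+3)) = a * (1 - \<i> * sg)" using ss ii by algebra
    have "Tt (q (3*n+3)) = (-\<i>* sg) * (\<i>* sg)"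
      unfolding q3 St_app Tt_app Tt_flip A h by (simp add: ab ss)
    then show "Tt (q (3*n+3)) = 1" using ss ii by algebra
  qed
  have C: "St (q (3*n+4)) = 2*a + b - \<i> * sg * a" "Tt (q (3*n+4)) = \<i> * sg"
  proof -
    have "St (q (3*n+4)) = a * (1 - \<i> * sg) + (a+b)"
      unfolding q4 St_app Tt_app St_flip A B by (simp add: ab ss)
    then show "St (q (3*n+4)) = 2*a + b - \<i> * sg * a" using ss ii by algebra
    show "Tt (q (3*n+4)) = \<i> * sg"
      unfolding q4 St_app Tt_app Tt_flip A B by (simp add: ab ss)
  qed
  have e1: "3 * Suc n = 3*n+3" "3 * Suc n + 1 = 3*n+4" "Suc n + 1 = Suc (Suc n)" by simp_all
  have C': "St (q (3 * Suc n + 1)) = 2*a + b - \<i> * sg * a" "Tt (q (3 * Suc n + 1)) = \<i> * sg"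
    using C by (simp_all only: e1(2))
  have B': "St (q (3 * Suc n)) = a * (1 - \<i> * sg)" "Tt (q (3 * Suc n)) = 1"
    using B by (simp_all only: e1)
  show ?case unfolding B' C' sS by (simp add: a_def b_def algebra_simps)
qed



lemma len_q: "length (q (Suc (Suc m))) = length (q (Suc m)) + length (q m)"
  by (simp add: flipw_def)

lemma len_pos: "m \<ge> 1 \<Longrightarrow> length (q m) \<ge> 1"
proof (induction m rule: less_induct)
  case (less m)
  show ?case
  proof (cases m)
    case 0 then show ?thesis using less by simp
  next
    case (Suc k)
    show ?thesis
    proof (cases k)
      case 0 then show ?thesis using Suc by simp
    next
      case (Suc j)
      then show ?thesis using less.IH[of k] \<open>m = Suc k\<close> len_q[of j] by simp
    qed
  qed
qed

definition phi :: real where "phi = (1 + sqrt 5) / 2"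

lemma phi_sq: "phi^2 = phi + 1"
  by (simp add: phi_def power2_eq_square field_simps)

lemma phi_ge1: "phi \<ge> 1" unfolding phi_def
  using real_sqrt_ge_one[of 5] by simp

lemma len_bound: "real (length (q m)) \<le> phi ^ m"
proof (induction m rule: less_induct)
  case (less m)
  show ?case
  proof (cases m)
    case 0 then show ?thesis by simp
  next
    case (Suc k)
    show ?thesis
    proof (cases k)
      case 0 then show ?thesis using Suc phi_ge1 by simp
    next
      case (Suc n)
      have "real (length (q (Suc (Suc n)))) = real (length (q (Suc n))) + real (length (q n))"
        by (simp add: len_q)
      also have "\<dots> \<le> phi^Suc n + phi^n" using less.IH[of "Suc n"] less.IH[of n] Suc \<open>m = Suc k\<close> by simp
      also have "\<dots> = phi^n * (phi + 1)" by (simp add: algebra_simps)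
      also have "\<dots> = phi^(Suc (Suc n))" using phi_sq by (simp add: power2_eq_square)
      finally show ?thesis using Suc \<open>m = Suc k\<close> by simp
    qed
  qed
qed

lemma phi_cube: "phi^3 = 2 + sqrt 5"
proof -
  have "phi^3 = phi * phi^2" by (simp add: power3_eq_cube power2_eq_square)
  also have "\<dots> = 2*phi + 1" using phi_sq by (simp add: algebra_simps power2_eq_square)
  also have "\<dots> = 2 + sqrt 5" by (simp add: phi_def)
  finally show ?thesis .
qed

lemma len_bound3: "real (length (q (3*n+1))) \<le> phi * (2 + sqrt 5)^n"
proof -
  have "phi ^ (3*n+1) = phi * (phi^3)^n" by (simp add: power_mult)
  then have eq: "phi ^ (3*n+1) = phi * (2 + sqrt 5)^n" by (simp only: phi_cube)
  show ?thesis by (subst eq[symmetric]) (rule len_bound)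
qed

lemma pell_props: "0 \<le> pell n \<and> pell n \<le> pell (Suc n) \<and> (1 + sqrt 2)^n / 2 \<le> pell (Suc n)
   \<and> (1 + sqrt 2)^(Suc n) / 2 \<le> pell (Suc (Suc n))"
proof (induction n)
  case 0
  have "sqrt 2 \<le> sqrt (2^2)" by (rule real_sqrt_le_mono) simp
  then have "sqrt 2 \<le> 2" by simp
  then show ?case by simp
next
  case (Suc n)
  have r: "(1 + sqrt 2)^2 = 2 * (1 + sqrt 2) + 1" by (simp add: power2_eq_square algebra_simps)
  have "(1 + sqrt 2)^(Suc (Suc n)) / 2 = 2 * ((1 + sqrt 2)^(Suc n)/2) + (1 + sqrt 2)^n / 2"
    using r by (simp add: power2_eq_square algebra_simps)
  also have "\<dots> \<le> 2 * pell (Suc (Suc n)) + pell (Suc n)" using Suc by simp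
  finally show ?case using Suc by simp
qed

lemma heading_norm: "norm (heading w i) = 1"
  by (induction i) (auto simp: norm_mult)

lemma conn_chain: "connected (\<Union>i\<le>k. closed_segment ((v::nat \<Rightarrow> complex) i) (v (Suc i)))"
proof (induction k)
  case 0 then show ?case by simp
next
  case (Suc k)
  have e: "(\<Union>i\<le>Suc k. closed_segment (v i) (v (Suc i))) =
     (\<Union>i\<le>k. closed_segment (v i) (v (Suc i))) \<union> closed_segment (v (Suc k)) (v (Suc (Suc k)))"
    by (auto simp: atMost_Suc)
  have "v (Suc k) \<in> (\<Union>i\<le>k. closed_segment (v i) (v (Suc i)))" by auto
  then show ?case unfolding e
    by (intro connected_Un Suc) auto
qed

lemma path_set_connected: "connected (path_set w)"
  unfolding path_set_def by (rule conn_chain)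

lemma vert_in_path: "k \<le> length w \<Longrightarrow> vert w k \<in> path_set w"
  unfolding path_set_def by auto

lemma vert0: "vert w 0 = 0" by (simp add: vert_def)

definition ww :: "nat \<Rightarrow> letter list" where
  "ww n = butlast (concat (replicate 4 (q (3 * n + 1))))"

lemma ww_eq: "ww n = q (3*n+1) @ butlast (q (3*n+1) @ q (3*n+1) @ q (3*n+1))"
proof -
  have "q (3*n+1) @ q (3*n+1) @ q (3*n+1) \<noteq> []" using len_pos[of "3*n+1"] by auto
  then show ?thesis unfolding ww_def by (simp add: numeral_eq_Suc butlast_append)
qed

lemma len_ww: "length (ww n) = 4 * length (q (3*n+1)) - 1"
  using len_pos[of "3*n+1"] by (simp add: ww_eq)

lemma Pi_eq: "Pi_poly n = path_set (ww n)" by (simp add: Pi_poly_def ww_def)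

lemma vert_ww: "vert (ww n) (length (q (3*n+1))) = St (q (3*n+1))"
  unfolding ww_eq St_def by (simp add: vert_prefix)

lemma St_form: "Re (St (q (3*n+1))) = pell (Suc n) \<and> \<bar>Im (St (q (3*n+1)))\<bar> = pell n"
proof -
  have "(-1::complex)^n = of_real ((-1)^n)" by simp
  then have "St (q (3*n+1)) = of_real (pell (n+1)) + \<i> * of_real ((-1)^n * pell n)"
    using inv[of n] by (simp add: algebra_simps)
  then show ?thesis using pell_props[of n] by (simp add: abs_mult)
qed

lemma key_points: "0 \<in> Pi_poly n" "St (q (3*n+1)) \<in> Pi_poly n"
proof -
  show "0 \<in> Pi_poly n" using vert_in_path[of 0 "ww n"] vert0 by (simp add: Pi_eq)
  have "length (q (3*n+1)) \<le> length (ww n)" using len_ww[of n] len_pos[of "3*n+1"] by simp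
  then show "St (q (3*n+1)) \<in> Pi_poly n" using vert_in_path vert_ww Pi_eq by metis
qed



lemma line_inner: "line \<theta> \<rho> = {z. z \<bullet> Complex (cos \<theta>) (sin \<theta>) = \<rho>}"
  by (simp add: line_def inner_complex_def)

definition cc :: real where "cc = (sqrt 3 - 1) / 2"

lemma cc_pos: "cc > 0"
proof -
  have "sqrt 1 < sqrt 3" by (rule real_sqrt_less_mono) simp
  then show ?thesis by (simp add: cc_def)
qed

lemma box_sub: "{0..pi/6} \<times> {0..cc * pell (Suc n)} \<subseteq> meeting_lines n"
proof safe
  fix \<theta> \<rho> assume th: "\<theta> \<in> {0..pi/6}" and rh: "\<rho> \<in> {0..cc * pell (Suc n)}"
  define k where "k = Complex (cos \<theta>) (sin \<theta>)"
  define S where "S = St (q (3*n+1))"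
  have SR: "Re S = pell (Suc n)" "\<bar>Im S\<bar> = pell n" using St_form[of n] by (auto simp: S_def)
  have pp: "0 \<le> pell n" "pell n \<le> pell (Suc n)" using pell_props[of n] by auto
  have t0: "0 \<le> \<theta>" "\<theta> \<le> pi/6" using th by auto
  have c1: "cos \<theta> \<ge> sqrt 3 / 2"
    using cos_monotone_0_pi_le[of \<theta> "pi/6"] t0 cos_30 by simp
  have s1: "sin \<theta> \<le> 1/2"
    using sin_monotone_2pi_le[of \<theta> "pi/6"] t0 sin_30 by simp
  have s0: "sin \<theta> \<ge> 0" using t0 by (intro sin_ge_zero) auto
  have "Im S * sin \<theta> \<ge> - (pell (Suc n) * sin \<theta>)"
  proof -
    have "\<bar>Im S * sin \<theta>\<bar> \<le> pell (Suc n) * sin \<theta>"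
      using SR pp s0 by (simp add: abs_mult mult_right_mono)
    then show ?thesis by linarith
  qed
  moreover have "pell (Suc n) * cos \<theta> \<ge> pell (Suc n) * (sqrt 3 / 2)"
    using c1 pp by (intro mult_left_mono) auto
  moreover have "pell (Suc n) * sin \<theta> \<le> pell (Suc n) * (1/2)"
    using s1 pp by (intro mult_left_mono) auto
  ultimately have "S \<bullet> k \<ge> cc * pell (Suc n)"
    by (simp add: k_def inner_complex_def SR cc_def algebra_simps)
  then have "0 \<bullet> k \<le> \<rho>" "\<rho> \<le> S \<bullet> k" using rh by auto
  then obtain z where "z \<in> Pi_poly n" "z \<bullet> k = \<rho>"
    using connected_ivt_component[of "Pi_poly n" 0 S k \<rho>] key_points[of n]
      path_set_connected Pi_eq S_def by metis
  then have "line \<theta> \<rho> \<inter> Pi_poly n \<noteq> {}" by (auto simp: line_inner k_def)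
  moreover have "\<theta> < pi" using t0 pi_gt_zero by linarith
  ultimately show "(\<theta>, \<rho>) \<in> meeting_lines n" using t0 by (simp add: meeting_lines_def)
qed

lemma box_meas: "emeasure lborel ({0..pi/6} \<times> {0..cc * pell (Suc n)}) = ennreal (pi/6 * (cc * pell (Suc n)))"
proof -
  have z: "0 \<le> cc * pell (Suc n)" using cc_pos pell_props[of n] by simp
  then have e: "ennreal (pi/6 * (cc * pell (Suc n))) = ennreal (pi/6) * ennreal (cc * pell (Suc n))"
    by (intro ennreal_mult) auto
  show ?thesis unfolding e using z
    by (simp add: lborel_prod[symmetric] lborel.emeasure_pair_measure_Times)
qed

lemma M_lower:
  assumes "measure lborel (meeting_lines n) > 0"
  shows "measure lborel (meeting_lines n) \<ge> pi/6 * (cc * pell (Suc n))"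
proof -
  let ?Mset = "meeting_lines n"
  have ms: "?Mset \<in> sets lborel" using assms measure_notin_sets by fastforce
  have fin: "emeasure lborel ?Mset \<noteq> \<infinity>" using assms by (auto simp: measure_def)
  have "emeasure lborel ({0..pi/6} \<times> {0..cc * pell (Suc n)}) \<le> emeasure lborel ?Mset"
    using box_sub ms by (intro emeasure_mono) auto
  also have "\<dots> = ennreal (measure lborel ?Mset)" using fin by (simp add: emeasure_eq_ennreal_measure)
  finally show ?thesis unfolding box_meas using ennreal_le_iff measure_nonneg by blast
qed



definition Tset :: "letter list \<Rightarrow> nat \<Rightarrow> (real \<times> real) set" where
  "Tset w i = {x. 0 \<le> fst x \<and> fst x \<le> pi \<and>
      \<bar>snd x - vert w i \<bullet> Complex (cos (fst x)) (sin (fst x))\<bar> \<le> 1}"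

lemma line_convex: "convex (line \<theta> \<rho>)"
proof -
  have "line \<theta> \<rho> = {z. Complex (cos \<theta>) (sin \<theta>) \<bullet> z = \<rho>}"
    by (simp add: line_inner inner_commute)
  then show ?thesis using convex_hyperplane by simp
qed

lemma seg_card: assumes "finite (line \<theta> \<rho> \<inter> closed_segment a b)"
  shows "card (line \<theta> \<rho> \<inter> closed_segment a b) \<le> 1"
proof -
  have "\<forall>x\<in>line \<theta> \<rho> \<inter> closed_segment a b. \<forall>y\<in>line \<theta> \<rho> \<inter> closed_segment a b. x = y"
  proof (intro ballI, rule ccontr)
    fix x y assume xy: "x \<in> line \<theta> \<rho> \<inter> closed_segment a b" "y \<in> line \<theta> \<rho> \<inter> closed_segment a b" "x \<noteq> y"
    have "closed_segment x y \<subseteq> line \<theta> \<rho> \<inter> closed_segment a b"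
      using xy by (intro closed_segment_subset convex_Int line_convex convex_closed_segment) auto
    then have "finite (closed_segment x y)" using assms finite_subset by blast
    then show False using xy(3) finite_closed_segment by simp
  qed
  then show ?thesis using card_le_Suc0_iff_eq[OF assms] by simp
qed

lemma seg_T: assumes "z \<in> line \<theta> \<rho> \<inter> closed_segment (vert w i) (vert w (Suc i))"
  "0 \<le> \<theta>" "\<theta> \<le> pi"
  shows "(\<theta>, \<rho>) \<in> Tset w i"
proof -
  define k where "k = Complex (cos \<theta>) (sin \<theta>)"
  have nk: "norm k = 1" by (simp add: k_def cmod_def)
  have zl: "z \<bullet> k = \<rho>" using assms(1) by (simp add: line_inner k_def)
  have "norm (z - vert w i) \<le> norm (vert w (Suc i) - vert w i)"
    using assms(1) segment_bound1 by blast
  also have "\<dots> = 1" by (simp add: vert_Suc heading_norm)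
  finally have "norm (z - vert w i) \<le> 1" .
  then have "\<bar>(z - vert w i) \<bullet> k\<bar> \<le> 1"
    using Cauchy_Schwarz_ineq2[of "z - vert w i" k] nk by simp
  then have "\<bar>\<rho> - vert w i \<bullet> k\<bar> \<le> 1" using zl by (simp add: inner_diff_left)
  then show ?thesis using assms by (simp add: Tset_def k_def)
qed

lemma card_bound:
  assumes "(\<theta>, \<rho>) \<in> meeting_lines n" "finite (line \<theta> \<rho> \<inter> Pi_poly n)"
  shows "real (card (line \<theta> \<rho> \<inter> Pi_poly n)) \<le> (\<Sum>i\<le>length (ww n). indicator (Tset (ww n) i) (\<theta>, \<rho>))"
proof -
  let ?w = "ww n"
  let ?S = "\<lambda>i. line \<theta> \<rho> \<inter> closed_segment (vert ?w i) (vert ?w (Suc i))"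
  have th: "0 \<le> \<theta>" "\<theta> \<le> pi" using assms(1) by (auto simp: meeting_lines_def)
  have eq: "line \<theta> \<rho> \<inter> Pi_poly n = (\<Union>i\<le>length ?w. ?S i)"
    by (auto simp: Pi_eq path_set_def)
  have fin: "\<And>i. i \<le> length ?w \<Longrightarrow> finite (?S i)"
    using assms(2) unfolding eq by (rule finite_subset[rotated]) auto
  have "card (line \<theta> \<rho> \<inter> Pi_poly n) \<le> (\<Sum>i\<le>length ?w. card (?S i))"
    unfolding eq using fin by (intro card_UN_le) auto
  then have "real (card (line \<theta> \<rho> \<inter> Pi_poly n)) \<le> (\<Sum>i\<le>length ?w. real (card (?S i)))"
    by (metis of_nat_le_iff of_nat_sum)
  also have "\<dots> \<le> (\<Sum>i\<le>length ?w. indicator (Tset ?w i) (\<theta>, \<rho>))"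
  proof (rule sum_mono)
    fix i assume i: "i \<in> {..length ?w}"
    show "real (card (?S i)) \<le> indicator (Tset ?w i) (\<theta>, \<rho>)"
    proof (cases "?S i = {}")
      case True then show ?thesis by simp
    next
      case False
      then obtain z where "z \<in> ?S i" by blast
      then have "(\<theta>, \<rho>) \<in> Tset ?w i" using seg_T th by blast
      moreover have "card (?S i) \<le> 1" using seg_card fin i by auto
      ultimately show ?thesis by simp
    qed
  qed
  finally show ?thesis .
qed

lemma Tset_sets: "Tset w i \<in> sets lborel"
proof -
  have "closed (Tset w i)"
    unfolding Tset_def
    by (intro closed_Collect_conj closed_Collect_le continuous_intros)
  then show ?thesis by (simp add: sets_lborel)
qed

lemma Tset_meas: "emeasure lborel (Tset w i) = ennreal (2 * pi)"
proof -
  define g where "g = (\<lambda>t. vert w i \<bullet> Complex (cos t) (sin t))"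
  have sl: "\<And>t. Pair t -` Tset w i = (if t \<in> {0..pi} then {g t - 1 .. g t + 1} else {})"
    by (auto simp: Tset_def g_def abs_le_iff)
  have "emeasure lborel (Tset w i) = emeasure (lborel \<Otimes>\<^sub>M lborel) (Tset w i)"
    by (simp add: lborel_prod)
  also have "\<dots> = (\<integral>\<^sup>+ t. emeasure lborel (Pair t -` Tset w i) \<partial>lborel)"
    using Tset_sets[of w i] by (intro lborel.emeasure_pair_measure_alt) (simp only: lborel_prod)
  also have "\<dots> = (\<integral>\<^sup>+ t. ennreal 2 * indicator {0..pi} t \<partial>lborel)"
    unfolding sl by (intro nn_integral_cong) (auto simp: indicator_def)
  also have "\<dots> = ennreal 2 * ennreal pi"
    by (simp add: nn_integral_cmult_indicator)
  also have "\<dots> = ennreal (2 * pi)" by (simp add: ennreal_mult)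
  finally show ?thesis .
qed



lemma ennreal_measure_le: "ennreal (measure M A) \<le> emeasure M A"
  by (cases "emeasure M A = \<infinity>") (auto simp: measure_def ennreal_enn2real_if)

lemma wsum:
  fixes A :: "nat \<Rightarrow> 'a set" and c :: "nat \<Rightarrow> real" and F :: "'a \<Rightarrow> ennreal"
  assumes J: "finite J" and dj: "disjoint_family_on A J" and c: "\<And>j. j\<in>J \<Longrightarrow> c j \<ge> 0"
    and F: "F \<in> borel_measurable M" and le: "\<And>j x. j\<in>J \<Longrightarrow> x\<in>A j \<Longrightarrow> ennreal (c j) \<le> F x"
  shows "ennreal (\<Sum>j\<in>J. c j * measure M (A j)) \<le> integral\<^sup>N M F"
proof -
  define J' where "J' = {j\<in>J. A j \<in> sets M}"
  have J': "finite J'" "J' \<subseteq> J" using J by (auto simp: J'_def)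
  have "(\<Sum>j\<in>J. c j * measure M (A j)) = (\<Sum>j\<in>J'. c j * measure M (A j))"
    using J' J by (intro sum.mono_neutral_right) (auto simp: J'_def measure_notin_sets)
  then have "ennreal (\<Sum>j\<in>J. c j * measure M (A j)) = (\<Sum>j\<in>J'. ennreal (c j * measure M (A j)))"
    using J' c by (simp add: sum_ennreal subset_iff)
  also have "\<dots> \<le> (\<Sum>j\<in>J'. ennreal (c j) * emeasure M (A j))"
    using J' c by (intro sum_mono) (auto simp: ennreal_mult ennreal_measure_le mult_left_mono)
  also have "\<dots> = (\<Sum>j\<in>J'. \<integral>\<^sup>+ x. ennreal (c j) * indicator (A j) x \<partial>M)"
    by (intro sum.cong refl) (simp add: J'_def nn_integral_cmult_indicator)
  also have "\<dots> = (\<integral>\<^sup>+ x. (\<Sum>j\<in>J'. ennreal (c j) * indicator (A j) x) \<partial>M)"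
    by (rule nn_integral_sum[symmetric]) (auto simp: J'_def)
  also have "\<dots> \<le> integral\<^sup>N M F"
  proof (rule nn_integral_mono)
    fix x
    show "(\<Sum>j\<in>J'. ennreal (c j) * indicator (A j) x) \<le> F x"
    proof (cases "\<exists>j\<in>J'. x \<in> A j")
      case False then show ?thesis by (simp add: indicator_def)
    next
      case True
      then obtain j0 where j0: "j0 \<in> J'" "x \<in> A j0" by blast
      have "(\<Sum>j\<in>J'. ennreal (c j) * indicator (A j) x) = ennreal (c j0) * indicator (A j0) x
          + (\<Sum>j\<in>J' - {j0}. ennreal (c j) * indicator (A j) x)"
        using J'(1) j0(1) by (rule sum.remove)
      also have "(\<Sum>j\<in>J' - {j0}. ennreal (c j) * indicator (A j) x) = 0"
      proof (intro sum.neutral ballI)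
        fix j assume "j \<in> J' - {j0}"
        then have "x \<notin> A j" using dj j0 J' unfolding disjoint_family_on_def by blast
        then show "ennreal (c j) * indicator (A j) x = 0" by simp
      qed
      finally show ?thesis using j0 le J' by auto
    qed
  qed
  finally show ?thesis .
qed

lemma ent:
  fixes p :: "nat \<Rightarrow> real" and \<mu> :: real
  assumes p0: "\<And>i. 0 \<le> p i" and s1: "(\<Sum>i<N. p i) \<le> 1"
    and sm: "(\<Sum>i<N. real (i+1) * p i) \<le> \<mu>" and mu: "\<mu> \<ge> 2"
  shows "- (\<Sum>i<N. p i * ln (p i)) \<le> 3 + ln \<mu>"
proof -
  define r where "r = 1 - 1/\<mu>"
  have r: "1/2 \<le> r" "r < 1" "0 < r" using mu by (auto simp: r_def field_simps)
  define qq where "qq i = (1/\<mu>) * r^i" for i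
  have qpos: "qq i > 0" for i using r mu by (simp add: qq_def)
  have lnr: "- ln r \<ge> 0" using r by simp
  have lnq: "- ln (qq i) = ln \<mu> + real i * (- ln r)" for i
    using r mu by (simp add: qq_def ln_mult ln_div ln_realpow)
  have pw: "- (p i * ln (p i)) \<le> qq i - p i + p i * (ln \<mu> + real i * (- ln r))" for i
  proof (cases "p i = 0")
    case True then show ?thesis using qpos[of i] by simp
  next
    case False
    then have pp: "p i > 0" using p0[of i] by simp
    have "ln (qq i / p i) \<le> qq i / p i - 1" using pp qpos[of i] by (intro ln_le_minus_one) simp
    then have "p i * ln (qq i / p i) \<le> p i * (qq i / p i - 1)" using pp by (intro mult_left_mono) auto
    then have "p i * (ln (qq i) - ln (p i)) \<le> qq i - p i"
      using pp qpos[of i] by (simp add: ln_div right_diff_distrib)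
    then show ?thesis using lnq[of i] by (simp add: algebra_simps)
  qed
  have "- (\<Sum>i<N. p i * ln (p i)) = (\<Sum>i<N. - (p i * ln (p i)))" by (simp add: sum_negf)
  also have "\<dots> \<le> (\<Sum>i<N. qq i - p i + p i * (ln \<mu> + real i * (- ln r)))"
    by (intro sum_mono pw)
  also have "\<dots> = (\<Sum>i<N. qq i) - (\<Sum>i<N. p i) + ln \<mu> * (\<Sum>i<N. p i) + (- ln r) * (\<Sum>i<N. real i * p i)"
  proof -
    have "(\<Sum>i<N. qq i - p i + p i * (ln \<mu> + real i * (- ln r))) =
        (\<Sum>i<N. (qq i - p i) + (ln \<mu> * p i + (- ln r) * (real i * p i)))"
      by (intro sum.cong refl) (simp add: algebra_simps)
    also have "\<dots> = (\<Sum>i<N. qq i) - (\<Sum>i<N. p i) + ((\<Sum>i<N. ln \<mu> * p i) + (\<Sum>i<N. (- ln r) * (real i * p i)))"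
      by (simp only: sum.distrib sum_subtractf)
    finally show ?thesis by (simp only: sum_distrib_left[symmetric] add.assoc)
  qed
  also have "\<dots> \<le> 1 + ln \<mu> + 2"
  proof -
    have g: "(\<Sum>i<N. qq i) = 1 - r^N"
    proof -
      have "(\<Sum>i<N. qq i) = (1/\<mu>) * (\<Sum>i<N. r^i)" by (simp add: qq_def sum_distrib_left)
      also have "\<dots> = (1/\<mu>) * ((1 - r^N) / (1 - r))" using r by (simp add: sum_gp_strict)
      also have "\<dots> = 1 - r^N" using mu by (simp add: r_def field_simps)
      finally show ?thesis .
    qed
    have q1: "(\<Sum>i<N. qq i) \<le> 1" unfolding g using r by simp
    have ps: "0 \<le> (\<Sum>i<N. p i)" using p0 by (simp add: sum_nonneg)
    have lm: "ln \<mu> \<ge> 0" using mu by simp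
    have t1: "ln \<mu> * (\<Sum>i<N. p i) \<le> ln \<mu>" using lm s1 ps by (simp add: mult_left_le)
    have si: "(\<Sum>i<N. real i * p i) \<le> \<mu>"
    proof -
      have "(\<Sum>i<N. real i * p i) \<le> (\<Sum>i<N. real (i+1) * p i)"
        using p0 by (intro sum_mono mult_right_mono) auto
      then show ?thesis using sm by linarith
    qed
    have "- ln r \<le> 1/r - 1"
    proof -
      have "ln (1/r) \<le> 1/r - 1" using r by (intro ln_le_minus_one) simp
      then show ?thesis using r by (simp add: ln_div)
    qed
    also have "1/r - 1 = 1/(\<mu> - 1)" using mu by (simp add: r_def field_simps)
    finally have lr: "- ln r \<le> 1/(\<mu>-1)" .
    have "(- ln r) * (\<Sum>i<N. real i * p i) \<le> (1/(\<mu>-1)) * \<mu>"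
      using lr lnr si p0 mu by (intro mult_mono) (auto intro: sum_nonneg)
    also have "\<dots> \<le> 2" using mu by (simp add: field_simps)
    finally show ?thesis using q1 t1 ps by linarith
  qed
  finally show ?thesis by simp
qed



definition Aset :: "nat \<Rightarrow> nat \<Rightarrow> (real \<times> real) set" where
  "Aset n j = {(\<theta>, \<rho>) \<in> meeting_lines n.
              finite (line \<theta> \<rho> \<inter> Pi_poly n) \<and> card (line \<theta> \<rho> \<inter> Pi_poly n) = j}"

lemma pj_eq: "pj n j = measure lborel (Aset n j) / measure lborel (meeting_lines n)"
  by (simp add: pj_def Aset_def)

lemma Aset_sub: "Aset n j \<subseteq> meeting_lines n" by (auto simp: Aset_def)

lemma Aset_card: assumes "x \<in> Aset n j"
  shows "real j \<le> (\<Sum>i\<le>length (ww n). indicator (Tset (ww n) i) x)"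
  using assms card_bound by (auto simp: Aset_def)

lemma Aset_empty: assumes "j > length (ww n) + 1" shows "Aset n j = {}"
proof (rule ccontr)
  assume "Aset n j \<noteq> {}"
  then obtain x where x: "x \<in> Aset n j" by blast
  have "(\<Sum>i\<le>length (ww n). indicator (Tset (ww n) i) x) \<le> (\<Sum>i\<le>length (ww n). (1::real))"
    by (intro sum_mono) (simp add: indicator_def)
  then have "real j \<le> real (length (ww n) + 1)" using Aset_card[OF x] by simp
  then show False using assms by simp
qed

lemma Aset_disj: "disjoint_family_on (\<lambda>i. Aset n (Suc i)) I"
  by (auto simp: disjoint_family_on_def Aset_def)

lemma hn_finite: "hn n = - (\<Sum>i<length (ww n) + 1. pj n (Suc i) * ln (pj n (Suc i)))"
proof -
  have "(\<Sum>j. pj n (Suc j) * ln (pj n (Suc j))) = (\<Sum>i<length (ww n) + 1. pj n (Suc i) * ln (pj n (Suc i)))"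
  proof (rule suminf_finite)
    fix i assume "i \<notin> {..<length (ww n) + 1}"
    then have "Aset n (Suc i) = {}" by (intro Aset_empty) simp
    then show "pj n (Suc i) * ln (pj n (Suc i)) = 0" by (simp add: pj_eq)
  qed simp
  then show ?thesis by (simp add: hn_def)
qed

definition rho :: real where "rho = (2 + sqrt 5) / (1 + sqrt 2)"
definition C0 :: real where "C0 = 16 * pi * phi / (pi / 6 * cc)"
definition C1 :: real where "C1 = 3 + ln (2 + C0)"

lemma C0_pos: "C0 > 0" using cc_pos phi_ge1 by (simp add: C0_def)

lemma rho_ge1: "rho \<ge> 1"
proof -
  have "sqrt 2 \<le> sqrt 5" by (rule real_sqrt_le_mono) simp
  moreover have "0 < 1 + sqrt 2" by (simp add: add_pos_nonneg)
  moreover have "sqrt 2 \<le> 1 + sqrt 5" using \<open>sqrt 2 \<le> sqrt 5\<close> by linarith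
  ultimately show ?thesis by (simp add: rho_def le_divide_eq)
qed

lemma C1_nonneg: "C1 \<ge> 0"
  using C0_pos by (simp add: C1_def)

lemma hn_bound: "hn n \<le> C1 + real n * ln rho"
proof -
  let ?Mset = "meeting_lines n"
  let ?M = "measure lborel ?Mset"
  let ?L = "length (ww n)"
  define K where "K = length (q (3*n+1))"
  have K1: "K \<ge> 1" using len_pos[of "3*n+1"] by (simp add: K_def)
  have L1: "real (?L + 1) = 4 * real K" using len_ww[of n] K1 by (simp add: K_def)
  have lnr: "ln rho \<ge> 0" using rho_ge1 by simp
  show ?thesis
  proof (cases "?M = 0")
    case True
    then have "hn n = 0" by (simp add: hn_finite pj_eq)
    then show ?thesis using C1_nonneg lnr by simp
  next
    case False
    then have Mpos: "?M > 0" using measure_nonneg[of lborel ?Mset] by linarith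
    have ms: "?Mset \<in> sets lborel" using Mpos measure_notin_sets by fastforce
    have fin: "emeasure lborel ?Mset \<noteq> \<infinity>" using Mpos by (auto simp: measure_def)
    define p where "p i = pj n (Suc i)" for i
    have p0: "0 \<le> p i" for i by (simp add: p_def pj_eq)
    have "ennreal (\<Sum>i<?L+1. 1 * measure lborel (Aset n (Suc i))) \<le> integral\<^sup>N lborel (indicator ?Mset)"
    proof (intro wsum Aset_disj)
      fix i x assume "x \<in> Aset n (Suc i)"
      then have "x \<in> ?Mset" using Aset_sub by blast
      then show "ennreal 1 \<le> indicator ?Mset x" by simp
    qed (use ms in auto)
    also have "\<dots> = ennreal ?M" using ms fin by (simp add: emeasure_eq_ennreal_measure)
    finally have S1: "(\<Sum>i<?L+1. measure lborel (Aset n (Suc i))) \<le> ?M"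
      using Mpos by (simp add: ennreal_le_iff)
    have s1: "(\<Sum>i<?L+1. p i) \<le> 1"
    proof -
      have "(\<Sum>i<?L+1. p i) = (\<Sum>i<?L+1. measure lborel (Aset n (Suc i))) / ?M"
        by (simp add: p_def pj_eq sum_divide_distrib del: sum.lessThan_Suc)
      then show ?thesis using S1 Mpos by (simp add: divide_le_eq)
    qed
    define F where "F x = (\<Sum>k\<le>?L. indicator (Tset (ww n) k) x :: ennreal)" for x
    have Fm: "F \<in> borel_measurable lborel" unfolding F_def
      using Tset_sets by (intro borel_measurable_sum) auto
    have "ennreal (\<Sum>i<?L+1. real (Suc i) * measure lborel (Aset n (Suc i))) \<le> integral\<^sup>N lborel F"
    proof (intro wsum Aset_disj Fm)
      fix i x assume "x \<in> Aset n (Suc i)"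
      then have "real (Suc i) \<le> (\<Sum>k\<le>?L. indicator (Tset (ww n) k) x)" by (rule Aset_card)
      then have "ennreal (real (Suc i)) \<le> ennreal (\<Sum>k\<le>?L. indicator (Tset (ww n) k) x)"
        by (rule ennreal_leI)
      also have "\<dots> = F x" unfolding F_def
        by (subst sum_ennreal[symmetric]) (auto simp: ennreal_indicator)
      finally show "ennreal (real (Suc i)) \<le> F x" .
    qed auto
    also have "integral\<^sup>N lborel F = (\<Sum>k\<le>?L. emeasure lborel (Tset (ww n) k))"
      unfolding F_def using Tset_sets by (subst nn_integral_sum) (auto simp: nn_integral_indicator)
    also have "\<dots> = ennreal (real (?L+1) * (2 * pi))"
      by (simp add: Tset_meas ennreal_mult ennreal_of_nat_eq_real_of_nat del: of_nat_Suc)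
    finally have S2: "(\<Sum>i<?L+1. real (Suc i) * measure lborel (Aset n (Suc i))) \<le> real (?L+1) * (2 * pi)"
      by (simp add: ennreal_le_iff del: of_nat_Suc)
    define mu0 where "mu0 = real (?L+1) * (2 * pi) / ?M"
    have s2: "(\<Sum>i<?L+1. real (i+1) * p i) \<le> mu0"
    proof -
      have "(\<Sum>i<?L+1. real (i+1) * p i) = (\<Sum>i<?L+1. real (Suc i) * measure lborel (Aset n (Suc i))) / ?M"
        by (simp add: p_def pj_eq sum_divide_distrib del: sum.lessThan_Suc)
      then show ?thesis using S2 Mpos unfolding mu0_def by (simp add: divide_right_mono)
    qed
    define mu where "mu = max 2 mu0"
    have "hn n \<le> 3 + ln mu"
      using ent[of p "?L+1" mu, OF p0 s1] s2 by (simp add: hn_finite p_def mu_def)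
    define X where "X = (1 + sqrt 2)^n"
    define Y where "Y = (2 + sqrt 5)^n"
    have Xp: "X > 0" unfolding X_def by (intro zero_less_power add_pos_nonneg) auto
    have Yp: "Y > 0" unfolding Y_def by (intro zero_less_power add_pos_nonneg) auto
    have D: "pell (Suc n) \<ge> X / 2" using pell_props[of n] by (simp add: X_def)
    have hMl: "?M \<ge> pi/6 * cc * (X/2)"
    proof -
      have "pi/6 * cc * (X/2) \<le> pi/6 * cc * pell (Suc n)"
        using D cc_pos by (intro mult_left_mono) auto
      then show ?thesis using M_lower[OF Mpos] by (simp only: mult.assoc)
    qed
    have KY: "real K \<le> phi * Y" using len_bound3[of n] by (simp add: K_def Y_def)
    have "mu0 \<le> real (?L+1) * (2 * pi) / (pi/6 * cc * (X/2))"
      unfolding mu0_def using hMl Xp cc_pos Mpos by (intro divide_left_mono) (auto intro!: mult_pos_pos)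
    also have "\<dots> = (16 * pi / (pi / 6 * cc)) * (K / X)" unfolding L1 using cc_pos Xp by (simp add: field_simps)
    also have "\<dots> \<le> (16 * pi / (pi / 6 * cc)) * (phi * Y / X)"
      using KY Xp cc_pos by (intro mult_left_mono divide_right_mono) auto
    also have "\<dots> = C0 * rho^n" using Xp
      by (simp add: C0_def rho_def X_def Y_def power_divide)
    finally have m0: "mu0 \<le> C0 * rho^n" .
    have rn: "rho^n \<ge> 1" using rho_ge1 by simp
    have "mu \<le> (2 + C0) * rho^n"
      unfolding mu_def distrib_right using m0 rn mult_nonneg_nonneg[of C0 "rho^n"] C0_pos by (intro max.boundedI) linarith+
    then have "ln mu \<le> ln ((2 + C0) * rho^n)" using C0_pos by (simp add: mu_def)
    also have "\<dots> = ln (2 + C0) + real n * ln rho"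
      using C0_pos rho_ge1 by (simp add: ln_mult ln_realpow)
    finally show ?thesis using \<open>hn n \<le> 3 + ln mu\<close> by (simp add: C1_def)
  qed
qed



theorem theorem3:
  shows "limsup (\<lambda>n. ereal (hn n / real n)) \<le> ereal (ln ((2 + sqrt 5) / (1 + sqrt 2)))"
proof -
  have ev: "\<forall>\<^sub>F n in sequentially. ereal (hn n / real n) \<le> ereal (ln rho + C1 * (1 / real n))"
    using eventually_ge_at_top[of "1::nat"]
  proof (rule eventually_mono)
    fix n :: nat assume n: "1 \<le> n"
    have "hn n / real n \<le> (C1 + real n * ln rho) / real n"
      using hn_bound[of n] n by (intro divide_right_mono) auto
    also have "\<dots> = ln rho + C1 * (1 / real n)" using n by (simp add: field_simps)
    finally show "ereal (hn n / real n) \<le> ereal (ln rho + C1 * (1 / real n))" by simp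
  qed
  have t: "(\<lambda>n. ln rho + C1 * (1 / real n)) \<longlonglongrightarrow> ln rho"
  proof -
    have "(\<lambda>n. C1 * (1 / real n)) \<longlonglongrightarrow> C1 * 0" by (intro tendsto_mult tendsto_const lim_inverse_n')
    then have "(\<lambda>n. ln rho + C1 * (1 / real n)) \<longlonglongrightarrow> ln rho + C1 * 0" by (intro tendsto_add tendsto_const)
    then show ?thesis by (simp only: mult_zero_right add_0_right)
  qed
  have "limsup (\<lambda>n. ereal (hn n / real n)) \<le> limsup (\<lambda>n. ereal (ln rho + C1 * (1 / real n)))"
    by (rule Limsup_mono[OF ev])
  also have "\<dots> = ereal (ln rho)"
  proof (rule lim_imp_Limsup)
    show "sequentially \<noteq> bot" by simp
    show "(\<lambda>n. ereal (ln rho + C1 * (1 / real n))) \<longlonglongrightarrow> ereal (ln rho)"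
      unfolding lim_ereal by (rule t)
  qed
  finally show ?thesis by (simp add: rho_def)
qed

end
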